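(* Let $M\in\mathrm{Mat}(2,\mathbb{Z})$ with $D=\det(M)$, and let $n=p_1^{r_1}p_2^{r_2}\cdots p_s^{r_s}$ be the prime decomposition of $n$. If $n$ is not divisible by $4$, then $M$ is reversible mod $n$ if and only if, for each $1\le i\le s$, $D\equiv1$ or $M^2\equiv\mathbb{1}\pmod{p_i^{r_i}}$. If $n=2^{r_1}p_2^{r_2}\cdots p_s^{r_s}$ with $r_1\ge2$ (and $p_2,\dots,p_s$ odd), then $M$ is reversible mod $n$ if and only if $M$ is reversible mod $2^{r_1}$ and, for all $i>1$, $D\equiv1$ or $M^2\equiv\mathbb{1}\pmod{p_i^{r_i}}$.
   Context: $M$ is reversible mod $k$ if $\det M$ is a unit mod $k$ and there exists $R\in\mathrm{GL}(2,\mathbb{Z}/k\mathbb{Z})$ with $RMR^{-1}\equiv M^{-1}\pmod k$. *)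

theory Defs
  imports "HOL-Analysis.Analysis" "HOL-Number_Theory.Number_Theory"
begin

definition matcong :: "int^2^2 \<Rightarrow> int^2^2 \<Rightarrow> int \<Rightarrow> bool" where
  "matcong A B k \<longleftrightarrow> (\<forall>i j. [A $ i $ j = B $ i $ j] (mod k))"

text \<open>An integer matrix represents an element of GL(2, Z/kZ), with inverse
  represented by Ainv, if A Ainv = Ainv A = 1 mod k.\<close>

definition inv_mod :: "int^2^2 \<Rightarrow> int^2^2 \<Rightarrow> int \<Rightarrow> bool" where
  "inv_mod A Ainv k \<longleftrightarrow> matcong (A ** Ainv) (mat 1) k \<and> matcong (Ainv ** A) (mat 1) k"

definition reversible_mod :: "int^2^2 \<Rightarrow> int \<Rightarrow> bool" where
  "reversible_mod M k \<longleftrightarrow> coprime (det M) k \<and>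
     (\<exists>R Rinv Minv. inv_mod R Rinv k \<and> inv_mod M Minv k \<and>
        matcong (R ** M ** Rinv) Minv k)"

end

theory Submission
  imports Defs
begin

lemma mult2: "((A::int^2^2) ** B) $ i $ j = A$i$1 * B$1$j + A$i$2 * B$2$j"
  by (simp add: matrix_matrix_mult_def sum_2)

lemma matcong2: "matcong A B k \<longleftrightarrow>
   [A$1$1 = B$1$1] (mod k) \<and> [A$1$2 = B$1$2] (mod k) \<and>
   [A$2$1 = B$2$1] (mod k) \<and> [A$2$2 = B$2$2] (mod k)"
  by (simp add: matcong_def forall_2)

lemma mat1_2: "(mat 1 :: int^2^2)$1$1 = 1" "(mat 1 :: int^2^2)$1$2 = 0"
   "(mat 1 :: int^2^2)$2$1 = 0" "(mat 1 :: int^2^2)$2$2 = 1"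
  by (simp_all add: mat_def)

lemma matcong_refl: "matcong A A k" by (simp add: matcong_def)
lemma matcong_sym: "matcong A B k \<Longrightarrow> matcong B A k"
  by (simp add: matcong_def cong_sym)
lemma matcong_trans: "matcong A B k \<Longrightarrow> matcong B C k \<Longrightarrow> matcong A C k"
  unfolding matcong_def by (meson cong_trans)

lemma matcong_mult: "matcong (A::int^2^2) A' k \<Longrightarrow> matcong B B' k \<Longrightarrow> matcong (A ** B) (A' ** B') k"
  unfolding matcong_def mult2 by (meson cong_add cong_mult)

lemma matcong_det: "matcong (A::int^2^2) B k \<Longrightarrow> [det A = det B] (mod k)"
  unfolding matcong2 det_2 by (meson cong_diff cong_mult)

lemma matcong_dvd: "matcong A B k \<Longrightarrow> d dvd k \<Longrightarrow> matcong A B d"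
  unfolding matcong_def using cong_dvd_modulus by blast

lemma matcong_coprime: "matcong A B a \<Longrightarrow> matcong A B b \<Longrightarrow> coprime a b \<Longrightarrow> matcong A B (a*b)"
  unfolding matcong_def using coprime_cong_mult by blast


definition revC :: "int^2^2 \<Rightarrow> int \<Rightarrow> bool" where
  "revC M k \<longleftrightarrow> coprime (det M) k \<and> (\<exists>R. coprime (det R) k \<and> matcong (M ** R ** M) R k)"

lemma inv_exists:
  assumes "coprime (det (A::int^2^2)) k"
  shows "\<exists>Ainv. inv_mod A Ainv k"
proof -
  obtain u where u: "[det A * u = 1] (mod k)" using cong_solve_coprime_int[OF assms] by blast
  define B :: "int^2^2" where "B = (\<chi> i j. if i = 1 then (if j = 1 then u * A$2$2 else - u * A$1$2)
                 else (if j = 1 then - u * A$2$1 else u * A$1$1))"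
  have B: "B$1$1 = u * A$2$2" "B$1$2 = - u * A$1$2" "B$2$1 = - u * A$2$1" "B$2$2 = u * A$1$1"
    by (simp_all add: B_def)
  have p: "(A**B)$1$1 = det A * u" "(A**B)$1$2 = 0" "(A**B)$2$1 = 0" "(A**B)$2$2 = det A * u"
     "(B**A)$1$1 = det A * u" "(B**A)$1$2 = 0" "(B**A)$2$1 = 0" "(B**A)$2$2 = det A * u"
    by (simp_all add: mult2 B det_2 algebra_simps)
  have "inv_mod A B k"
    unfolding inv_mod_def matcong2 p mat1_2
    using u by (simp add: mult.commute)
  then show ?thesis by blast
qed

lemma cong_coprime1: "[a * b = 1] (mod k) \<Longrightarrow> coprime (a::int) k"
  by (metis cong_solve_coprime_int coprime_iff_invertible_int mult.assoc)

lemma mc_lmul: "matcong A B k \<Longrightarrow> matcong (C ** A) (C ** (B::int^2^2)) k"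
  using matcong_mult matcong_refl by blast
lemma mc_rmul: "matcong A B k \<Longrightarrow> matcong (A ** C) (B ** (C::int^2^2)) k"
  using matcong_mult matcong_refl by blast

lemma rev_iff: "reversible_mod M k \<longleftrightarrow> revC M k"
proof
  assume "reversible_mod M k"
  then obtain R Rinv Minv where cM: "coprime (det M) k" and iR: "inv_mod R Rinv k"
    and iM: "inv_mod M Minv k" and c: "matcong (R ** M ** Rinv) Minv k"
    unfolding reversible_mod_def by blast
  have "[det (R ** Rinv) = det (mat 1 :: int^2^2)] (mod k)"
    using iR unfolding inv_mod_def by (blast intro: matcong_det)
  then have "[det R * det Rinv = 1] (mod k)" by (simp add: det_mul)
  then have cR: "coprime (det R) k" by (rule cong_coprime1)
  have A: "matcong (R ** M ** Rinv ** R) (Minv ** R) k"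
    using c by (rule mc_rmul)
  have eq: "R ** M ** Rinv ** R = (R ** M) ** (Rinv ** R)" by (simp add: matrix_mul_assoc)
  have B: "matcong ((R ** M) ** (Rinv ** R)) ((R ** M) ** mat 1) k"
    using iR unfolding inv_mod_def by (blast intro: mc_lmul)
  have "matcong (R ** M) (R ** M ** Rinv ** R) k"
    using matcong_sym[OF B] eq by simp
  then have C: "matcong (R ** M) (Minv ** R) k" using A by (rule matcong_trans)
  have D: "matcong (M ** (R ** M)) (M ** (Minv ** R)) k" using C by (rule mc_lmul)
  have E: "matcong ((M ** Minv) ** R) (mat 1 ** R) k"
    using iM unfolding inv_mod_def by (blast intro: mc_rmul)
  have "matcong (M ** R ** M) R k"
    using matcong_trans[OF D[unfolded matrix_mul_assoc] E] by simp
  then show "revC M k" using cM cR unfolding revC_def by blast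
next
  assume "revC M k"
  then obtain R where cM: "coprime (det M) k" and cR: "coprime (det R) k"
    and c: "matcong (M ** R ** M) R k" unfolding revC_def by blast
  obtain Rinv where iR: "inv_mod R Rinv k" using inv_exists[OF cR] by blast
  obtain Minv where iM: "inv_mod M Minv k" using inv_exists[OF cM] by blast
  have A: "matcong (Minv ** (M ** R ** M)) (Minv ** R) k" using c by (rule mc_lmul)
  have B: "matcong ((Minv ** M) ** (R ** M)) (mat 1 ** (R ** M)) k"
    using iM unfolding inv_mod_def by (blast intro: mc_rmul)
  have "matcong (R ** M) (Minv ** (M ** R ** M)) k"
    using matcong_sym[OF B] by (simp add: matrix_mul_assoc)
  then have C: "matcong (R ** M) (Minv ** R) k" using A by (rule matcong_trans)
  have D: "matcong (R ** M ** Rinv) (Minv ** R ** Rinv) k" using C by (rule mc_rmul)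
  have E: "matcong (Minv ** (R ** Rinv)) (Minv ** mat 1) k"
    using iR unfolding inv_mod_def by (blast intro: mc_lmul)
  have "matcong (R ** M ** Rinv) Minv k"
    using matcong_trans[OF D E[unfolded matrix_mul_assoc]] by simp
  then show "reversible_mod M k" using cM iR iM unfolding reversible_mod_def by blast
qed


lemma exR:
  fixes p :: int
  assumes p: "prime p"
  shows "\<exists>x y z. p^r dvd (al*x + c*y + b*z) \<and> \<not> p dvd (x^2 + y*z)"
  using assms
proof (induction r arbitrary: al b c)
  case 0
  have "\<not> p dvd (1^2 + 0*0)" using prime_gt_1_int[OF p] by simp
  then show ?case by (intro exI[of _ 1] exI[of _ 0]) simp
next
  case (Suc r)
  show ?case
  proof (cases "p dvd c")
    case False
    have "\<not> p dvd (c^2 + (-al)*0)" using False p prime_dvd_power by auto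
    moreover have "p^Suc r dvd (al*c + c*(-al) + b*0)" by simp
    ultimately show ?thesis by blast
  next
    case pc: True
    show ?thesis
    proof (cases "p dvd b")
      case False
      have "\<not> p dvd (b^2 + 0*(-al))" using False p prime_dvd_power by auto
      moreover have "p^Suc r dvd (al*b + c*0 + b*(-al))" by simp
      ultimately show ?thesis by blast
    next
      case pb: True
      show ?thesis
      proof (cases "p dvd al")
        case False
        then have "coprime al p" using p prime_imp_coprime coprime_commute by blast
        then have "coprime al (p^Suc r)" by simp
        then obtain u where u: "[al * u = 1] (mod p^Suc r)" using cong_solve_coprime_int by blast
        define x where "x = (b - c) * u"
        have "[al*x + c*1 + b*(-1) = 1 * (b - c) + c - b] (mod p^Suc r)"
          unfolding x_def using u
          by (metis (no_types) cong_add cong_diff cong_refl cong_scalar_right mult.assoc mult.commute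
               mult.right_neutral mult_minus1_right add_uminus_conv_diff)
        then have "p^Suc r dvd (al*x + c*1 + b*(-1))"
          by (simp add: cong_0_iff)
        moreover have "\<not> p dvd (x^2 + 1*(-1))"
        proof
          assume h: "p dvd (x^2 + 1*(-1))"
          have "p dvd x" unfolding x_def using pb pc by simp
          then have "p dvd x^2" by (simp add: power2_eq_square)
          with h have "p dvd 1" by (metis add_diff_cancel_left' dvd_diff mult_minus1_right
              mult_1 diff_minus_eq_add minus_minus)
          then show False using p by (simp add: not_prime_unit)
        qed
        ultimately show ?thesis by blast
      next
        case pa: True
        obtain al' where al': "al = p * al'" using pa by blast
        obtain b' where b': "b = p * b'" using pb by blast
        obtain c' where c': "c = p * c'" using pc by blast
        obtain x y z where xyz: "p^r dvd (al'*x + c'*y + b'*z)" "\<not> p dvd (x^2 + y*z)"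
          using Suc.IH[OF p] by blast
        have "al*x + c*y + b*z = p * (al'*x + c'*y + b'*z)" by (simp add: al' b' c' algebra_simps)
        then have "p^Suc r dvd (al*x + c*y + b*z)" using xyz(1) by simp
        then show ?thesis using xyz(2) by blast
      qed
    qed
  qed
qed


lemma MRM_entry:
  fixes M R :: "int^2^2"
  assumes "R$2$2 = - R$1$1"
  shows "(M ** R ** M)$i$j = det M * R$i$j +
     ((M$1$1 - M$2$2) * R$1$1 + M$2$1 * R$1$2 + M$1$2 * R$2$1) * M$i$j"
proof -
  have "i = 1 \<or> i = 2" "j = 1 \<or> j = 2" using exhaust_2 by auto
  then show ?thesis using assms by (auto simp: mult2 det_2 algebra_simps)
qed

lemma revC_sl:
  fixes p :: int
  assumes p: "prime p" and D: "[det M = 1] (mod p^r)"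
  shows "revC M (p^r)"
proof -
  obtain x y z where xyz: "p^r dvd ((M$1$1 - M$2$2)*x + M$2$1*y + M$1$2*z)" "\<not> p dvd (x^2 + y*z)"
    using exR[OF p] by blast
  define R :: "int^2^2" where "R = (\<chi> i j. if i = 1 then (if j = 1 then x else y)
                 else (if j = 1 then z else -x))"
  have R: "R$1$1 = x" "R$1$2 = y" "R$2$1 = z" "R$2$2 = -x" by (simp_all add: R_def)
  have dR: "det R = - (x^2 + y*z)" by (simp add: det_2 R power2_eq_square)
  have "coprime p (x^2 + y*z)" using xyz(2) p prime_imp_coprime by blast
  then have "coprime p (det R)" unfolding dR by (subst coprime_minus_right_iff)
  then have "coprime (det R) (p^r)" by (simp add: coprime_commute)
  moreover have "coprime (det M) (p^r)" using D cong_coprime1[of "det M" 1 "p^r"] by (simp only: mult_1_right)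
  moreover have "matcong (M ** R ** M) R (p^r)"
    unfolding matcong_def
  proof (intro allI)
    fix i j
    have "(M ** R ** M)$i$j = det M * R$i$j +
     ((M$1$1 - M$2$2) * x + M$2$1 * y + M$1$2 * z) * M$i$j"
      using MRM_entry[of R M i j] by (simp add: R)
    moreover have "[det M * R$i$j + ((M$1$1 - M$2$2) * x + M$2$1 * y + M$1$2 * z) * M$i$j
        = 1 * R$i$j + 0 * M$i$j] (mod p^r)"
      using D xyz(1) by (intro cong_add cong_mult cong_refl) (simp_all add: cong_0_iff)
    ultimately show "[(M ** R ** M)$i$j = R$i$j] (mod p^r)" by simp
  qed
  ultimately show ?thesis unfolding revC_def by blast
qed

lemma revC_inv:
  assumes "matcong ((M::int^2^2) ** M) (mat 1) k"
  shows "revC M k"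
proof -
  have "[det (M ** M) = det (mat 1 :: int^2^2)] (mod k)" using assms by (rule matcong_det)
  then have "[det M * det M = 1] (mod k)" by (simp add: det_mul)
  then have "coprime (det M) k" by (rule cong_coprime1)
  moreover have "matcong (M ** mat 1 ** M) (mat 1) k" using assms by simp
  moreover have "coprime (det (mat 1 :: int^2^2)) k" by simp
  ultimately show ?thesis unfolding revC_def by blast
qed


lemma trace_id:
  fixes M R :: "int^2^2"
  shows "det R * (M$1$1 + M$2$2) * (det M - 1) =
    ((M ** R ** M)$1$1 - R$1$1) * (M$2$2 * R$2$2 + M$1$2 * R$2$1) +
    ((M ** R ** M)$1$2 - R$1$2) * (- M$2$1 * R$2$2 - M$1$1 * R$2$1) +
    ((M ** R ** M)$2$1 - R$2$1) * (- M$2$2 * R$1$2 - M$1$2 * R$1$1) +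
    ((M ** R ** M)$2$2 - R$2$2) * (M$2$1 * R$1$2 + M$1$1 * R$1$1)"
  by (simp add: mult2 det_2 algebra_simps)


lemma p_dvd2: "prime (p::int) \<Longrightarrow> p dvd 2 \<Longrightarrow> p = 2"
  using prime_gt_1_int[of p] zdvd_imp_le[of p 2] by (cases "p = 1") auto

lemma revC_nec:
  fixes p :: int
  assumes p: "prime p" and r: "r \<ge> 1" and pr: "p \<noteq> 2 \<or> r = 1" and rv: "revC M (p^r)"
  shows "[det M = 1] (mod p^r) \<or> matcong (M ** M) (mat 1) (p^r)"
proof -
  define q where "q = p^r"
  obtain R where cM: "coprime (det M) q" and cR: "coprime (det R) q"
    and c: "matcong (M ** R ** M) R q" using rv unfolding revC_def q_def by blast
  have "[det (M ** R ** M) = det R] (mod q)" using c by (rule matcong_det)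
  then have "[det R * (det M * det M) = det R * 1] (mod q)" by (simp add: det_mul ac_simps)
  then have D2: "[det M * det M = 1] (mod q)" using cR cong_mult_lcancel by blast
  show ?thesis
  proof (cases "p = 2")
    case True
    then have q2: "q = 2" using pr q_def by simp
    then have "odd (det M)" using cM by simp
    then have "[det M = 1] (mod q)" using q2 by (simp add: cong_def odd_iff_mod_2_eq_one)
    then show ?thesis unfolding q_def by blast
  next
    case pn2: False
    have "q dvd det M * det M - 1" using D2 by (simp add: cong_iff_dvd_diff)
    moreover have "det M * det M - 1 = (det M - 1) * (det M + 1)" by (simp add: algebra_simps)
    ultimately have qd: "q dvd (det M - 1) * (det M + 1)" by simp
    show ?thesis
    proof (cases "p dvd det M + 1")
      case False
      then have "coprime p (det M + 1)" using p prime_imp_coprime by blast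
      then have "coprime q (det M + 1)" unfolding q_def using r by simp
      then have "q dvd det M - 1" using qd coprime_dvd_mult_left_iff by blast
      then show ?thesis unfolding q_def by (simp add: cong_iff_dvd_diff)
    next
      case pd: True
      have "\<not> p dvd det M - 1"
      proof
        assume "p dvd det M - 1"
        then have "p dvd (det M + 1) - (det M - 1)" using pd by (rule dvd_diff[rotated])
        then have "p dvd 2" by simp
        then show False using p pn2 p_dvd2 by blast
      qed
      then have "coprime p (det M - 1)" using p prime_imp_coprime by blast
      then have "coprime q (det M - 1)" unfolding q_def using r by simp
      then have qD: "q dvd det M + 1" using qd coprime_dvd_mult_right_iff by blast
      have E: "q dvd (M ** R ** M)$1$1 - R$1$1" "q dvd (M ** R ** M)$1$2 - R$1$2"
        "q dvd (M ** R ** M)$2$1 - R$2$1" "q dvd (M ** R ** M)$2$2 - R$2$2"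
        using c unfolding matcong2 by (simp_all add: cong_iff_dvd_diff)
      have "q dvd det R * (M$1$1 + M$2$2) * (det M - 1)"
        unfolding trace_id using E by (intro dvd_add dvd_mult2)
      moreover have "q dvd det R * (M$1$1 + M$2$2) * (det M + 1)" using qD by simp
      ultimately have "q dvd det R * (M$1$1 + M$2$2) * (det M + 1) - det R * (M$1$1 + M$2$2) * (det M - 1)"
        by (intro dvd_diff)
      moreover have "det R * (M$1$1 + M$2$2) * (det M + 1) - det R * (M$1$1 + M$2$2) * (det M - 1)
         = (2 * det R) * (M$1$1 + M$2$2)" by (simp add: algebra_simps)
      ultimately have q2t: "q dvd (2 * det R) * (M$1$1 + M$2$2)" by simp
      have "\<not> p dvd 2" using p pn2 p_dvd2 by blast
      then have "coprime p 2" using p prime_imp_coprime by blast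
      then have "coprime q 2" unfolding q_def using r by simp
      then have "coprime q (2 * det R)" using cR by (simp add: coprime_commute)
      then have qt: "q dvd M$1$1 + M$2$2" using q2t coprime_dvd_mult_right_iff by blast
      have m: "(M**M)$1$1 - 1 = M$1$1 * (M$1$1 + M$2$2) - (det M + 1)"
        "(M**M)$1$2 - 0 = M$1$2 * (M$1$1 + M$2$2)"
        "(M**M)$2$1 - 0 = M$2$1 * (M$1$1 + M$2$2)"
        "(M**M)$2$2 - 1 = M$2$2 * (M$1$1 + M$2$2) - (det M + 1)"
        by (simp_all add: mult2 det_2 algebra_simps)
      have "matcong (M ** M) (mat 1) q"
        unfolding matcong2 mat1_2 cong_iff_dvd_diff m using qt qD by simp
      then show ?thesis unfolding q_def by blast
    qed
  qed
qed


lemma revC_div: "revC M k \<Longrightarrow> d dvd k \<Longrightarrow> revC M d"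
  unfolding revC_def using coprime_divisors matcong_dvd by (meson dvd_refl)

lemma revC_1: "revC M 1"
  unfolding revC_def matcong_def by (intro conjI exI[of _ "mat 1"]) auto

lemma revC_glue:
  assumes A: "revC M a" and B: "revC M b" and ab: "coprime a b"
  shows "revC M (a * b)"
proof -
  obtain R1 where cM: "coprime (det M) a" and c1: "coprime (det R1) a"
    and m1: "matcong (M ** R1 ** M) R1 a" using A unfolding revC_def by blast
  obtain R2 where cM2: "coprime (det M) b" and c2: "coprime (det R2) b"
    and m2: "matcong (M ** R2 ** M) R2 b" using B unfolding revC_def by blast
  define X :: "int^2^2" where "X = (\<chi> i j. SOME x. [x = R1$i$j] (mod a) \<and> [x = R2$i$j] (mod b))"
  have "\<And>i j. [X$i$j = R1$i$j] (mod a) \<and> [X$i$j = R2$i$j] (mod b)"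
  proof -
    fix i j
    show "[X$i$j = R1$i$j] (mod a) \<and> [X$i$j = R2$i$j] (mod b)"
      unfolding X_def using someI_ex[OF binary_chinese_remainder_int[OF ab, of "R1$i$j" "R2$i$j"]] by simp
  qed
  then have X1: "matcong X R1 a" and X2: "matcong X R2 b" unfolding matcong_def by auto
  have "matcong (M ** X ** M) X a"
    using matcong_trans[OF matcong_mult[OF matcong_mult[OF matcong_refl X1] matcong_refl] m1]
      matcong_sym[OF X1] matcong_trans by blast
  moreover have "matcong (M ** X ** M) X b"
    using matcong_trans[OF matcong_mult[OF matcong_mult[OF matcong_refl X2] matcong_refl] m2]
      matcong_sym[OF X2] matcong_trans by blast
  ultimately have "matcong (M ** X ** M) X (a * b)" using ab by (rule matcong_coprime)
  moreover have "coprime (det X) a"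
    using cong_imp_coprime[OF cong_sym[OF matcong_det[OF X1]] c1] .
  moreover have "coprime (det X) b"
    using cong_imp_coprime[OF cong_sym[OF matcong_det[OF X2]] c2] .
  ultimately show ?thesis using cM cM2 unfolding revC_def by auto
qed

lemma revC_global:
  assumes n: "n > 0"
  shows "revC M (int n) \<longleftrightarrow> (\<forall>p\<in>prime_factors n. revC M (int (p ^ multiplicity p n)))"
proof
  assume "revC M (int n)"
  then show "\<forall>p\<in>prime_factors n. revC M (int (p ^ multiplicity p n))"
    using revC_div multiplicity_dvd by (metis int_dvd_int_iff)
next
  assume H: "\<forall>p\<in>prime_factors n. revC M (int (p ^ multiplicity p n))"
  have "finite S \<Longrightarrow> S \<subseteq> prime_factors n \<Longrightarrow> revC M (int (\<Prod>p\<in>S. p ^ multiplicity p n))" for S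
  proof (induction S rule: finite_induct)
    case empty
    then show ?case using revC_1 by simp
  next
    case (insert p S)
    have pp: "prime p" using insert.prems by auto
    have "coprime (p ^ multiplicity p n) (\<Prod>p\<in>S. p ^ multiplicity p n)"
    proof (rule prod_coprime_right)
      fix p' assume "p' \<in> S"
      then have "prime p'" "p' \<noteq> p" using insert by auto
      then have "coprime p p'" using pp primes_coprime by metis
      then show "coprime (p ^ multiplicity p n) (p' ^ multiplicity p' n)" by simp
    qed
    then have "coprime (int (p ^ multiplicity p n)) (int (\<Prod>p\<in>S. p ^ multiplicity p n))" by (subst coprime_int_iff)
    moreover have "revC M (int (\<Prod>p\<in>S. p ^ multiplicity p n))" using insert by auto
    moreover have "revC M (int (p ^ multiplicity p n))" using H insert.prems by auto
    ultimately have "revC M (int (p ^ multiplicity p n) * int (\<Prod>p\<in>S. p ^ multiplicity p n))"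
      using revC_glue by blast
    then show ?case using insert.hyps by (simp add: of_nat_mult)
  qed
  from this[of "prime_factors n"] show "revC M (int n)"
    using prime_factorization_nat[OF n] by simp
qed


lemma revC_local:
  assumes pf: "p \<in> prime_factors n" and h: "p \<noteq> 2 \<or> multiplicity p n = 1"
  shows "revC M (int (p ^ multiplicity p n)) \<longleftrightarrow>
    ([det M = 1] (mod int (p ^ multiplicity p n)) \<or> matcong (M ** M) (mat 1) (int (p ^ multiplicity p n)))"
proof -
  have pp: "prime (int p)" using pf by auto
  have "p \<in> {p. prime p \<and> multiplicity p n > 0}" using pf prime_factors_multiplicity by blast
  then have m: "multiplicity p n \<ge> 1" by simp
  have h': "int p \<noteq> 2 \<or> multiplicity p n = 1" using h by simp
  have e: "int (p ^ multiplicity p n) = (int p) ^ multiplicity p n" by simp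
  show ?thesis unfolding e
  proof
    assume "revC M (int p ^ multiplicity p n)"
    then show "[det M = 1] (mod int p ^ multiplicity p n) \<or> matcong (M ** M) (mat 1) (int p ^ multiplicity p n)"
      by (rule revC_nec[OF pp m h'])
  next
    assume "[det M = 1] (mod int p ^ multiplicity p n) \<or> matcong (M ** M) (mat 1) (int p ^ multiplicity p n)"
    then show "revC M (int p ^ multiplicity p n)"
    proof
      assume "[det M = 1] (mod int p ^ multiplicity p n)"
      then show ?thesis by (rule revC_sl[OF pp])
    next
      assume "matcong (M ** M) (mat 1) (int p ^ multiplicity p n)"
      then show ?thesis by (rule revC_inv)
    qed
  qed
qed

theorem corollary4p16:
  fixes M :: "int^2^2" and n :: nat
  assumes "n > 0"
  shows "(\<not> 4 dvd n \<longrightarrow>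
            (reversible_mod M (int n) \<longleftrightarrow>
              (\<forall>p\<in>prime_factors n.
                 [det M = 1] (mod int (p ^ multiplicity p n)) \<or>
                 matcong (M ** M) (mat 1) (int (p ^ multiplicity p n)))))
       \<and> (4 dvd n \<longrightarrow>
            (reversible_mod M (int n) \<longleftrightarrow>
              reversible_mod M (int (2 ^ multiplicity 2 n)) \<and>
              (\<forall>p\<in>prime_factors n. p \<noteq> 2 \<longrightarrow>
                 [det M = 1] (mod int (p ^ multiplicity p n)) \<or>
                 matcong (M ** M) (mat 1) (int (p ^ multiplicity p n)))))"
proof (intro conjI impI)
  have G: "reversible_mod M (int n) \<longleftrightarrow> (\<forall>p\<in>prime_factors n. revC M (int (p ^ multiplicity p n)))"
    unfolding rev_iff by (rule revC_global[OF assms])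
  {
    assume n4: "\<not> 4 dvd n"
    have H: "p \<noteq> 2 \<or> multiplicity p n = 1" if "p \<in> prime_factors n" for p
    proof (rule ccontr)
      assume "\<not> (p \<noteq> 2 \<or> multiplicity p n = 1)"
      then have p2: "p = 2" and "multiplicity p n \<noteq> 1" by auto
      moreover have "p \<in> {p. prime p \<and> multiplicity p n > 0}" using that prime_factors_multiplicity by blast
      then have "multiplicity p n \<ge> 1" by simp
      ultimately have "2 \<le> multiplicity 2 n" by auto
      then have "2^2 dvd n" by (rule multiplicity_dvd')
      then show False using n4 by simp
    qed
    then show "reversible_mod M (int n) \<longleftrightarrow>
              (\<forall>p\<in>prime_factors n.
                 [det M = 1] (mod int (p ^ multiplicity p n)) \<or>
                 matcong (M ** M) (mat 1) (int (p ^ multiplicity p n)))"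
      unfolding G
    proof (intro ball_cong[OF refl])
      fix p assume "p \<in> prime_factors n"
      then show "revC M (int (p ^ multiplicity p n)) \<longleftrightarrow>
        ([det M = 1] (mod int (p ^ multiplicity p n)) \<or> matcong (M ** M) (mat 1) (int (p ^ multiplicity p n)))"
        by (rule revC_local[OF _ H]) fact+
    qed
  }
  {
    assume n4: "4 dvd n"
    have "(2::nat) dvd n" using n4 by (rule dvd_trans[rotated]) simp
    then have p2: "2 \<in> prime_factors n" using assms by (simp add: in_prime_factors_iff)
    have E1: "revC M (int (p ^ multiplicity p n)) \<longleftrightarrow>
        ([det M = 1] (mod int (p ^ multiplicity p n)) \<or> matcong (M ** M) (mat 1) (int (p ^ multiplicity p n)))"
      if "p \<in> prime_factors n" "p \<noteq> 2" for p
      using that by (intro revC_local) simp_all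
    have L: "(\<forall>p\<in>prime_factors n. revC M (int (p ^ multiplicity p n))) \<longleftrightarrow>
              revC M (int (2 ^ multiplicity 2 n)) \<and>
              (\<forall>p\<in>prime_factors n. p \<noteq> 2 \<longrightarrow>
                 [det M = 1] (mod int (p ^ multiplicity p n)) \<or>
                 matcong (M ** M) (mat 1) (int (p ^ multiplicity p n)))"
    proof
      assume A: "\<forall>p\<in>prime_factors n. revC M (int (p ^ multiplicity p n))"
      show "revC M (int (2 ^ multiplicity 2 n)) \<and>
              (\<forall>p\<in>prime_factors n. p \<noteq> 2 \<longrightarrow>
                 [det M = 1] (mod int (p ^ multiplicity p n)) \<or>
                 matcong (M ** M) (mat 1) (int (p ^ multiplicity p n)))"
      proof (intro conjI ballI impI)
        show "revC M (int (2 ^ multiplicity 2 n))" using A p2 by blast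
      next
        fix p assume "p \<in> prime_factors n" "p \<noteq> 2"
        then show "[det M = 1] (mod int (p ^ multiplicity p n)) \<or>
                 matcong (M ** M) (mat 1) (int (p ^ multiplicity p n))"
          using A E1 by blast
      qed
    next
      assume B: "revC M (int (2 ^ multiplicity 2 n)) \<and>
              (\<forall>p\<in>prime_factors n. p \<noteq> 2 \<longrightarrow>
                 [det M = 1] (mod int (p ^ multiplicity p n)) \<or>
                 matcong (M ** M) (mat 1) (int (p ^ multiplicity p n)))"
      show "\<forall>p\<in>prime_factors n. revC M (int (p ^ multiplicity p n))"
      proof
        fix p assume p: "p \<in> prime_factors n"
        show "revC M (int (p ^ multiplicity p n))"
        proof (cases "p = 2")
          case True then show ?thesis using B by simp
        next
          case False then show ?thesis using B p E1 by blast
        qed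
      qed
    qed
    show "reversible_mod M (int n) \<longleftrightarrow>
              reversible_mod M (int (2 ^ multiplicity 2 n)) \<and>
              (\<forall>p\<in>prime_factors n. p \<noteq> 2 \<longrightarrow>
                 [det M = 1] (mod int (p ^ multiplicity p n)) \<or>
                 matcong (M ** M) (mat 1) (int (p ^ multiplicity p n)))"
      using L G rev_iff[of M "int (2 ^ multiplicity 2 n)"] by simp
  }
qed

end
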